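(* Let $\Delta=\{z\in\mathbb{C}:|z|<1\}$, let $\alpha\in(1/2,1)$ and let $\beta\in\mathbb{C}$ with $\mathrm{Re}\{\beta\}>-1/2$. If $f(z)=z|z|^{2\beta}h(z)\overline{g(z)}$, with $h,g$ analytic and non-vanishing in $\Delta$ and $h(0)=g(0)=1$, belongs to $\mathcal{S}^*_{LH}(\alpha)$, then $$\mathrm{Re}\left\{\frac{h(z)}{g(z)}\right\}>\frac{1}{3-2\alpha}\qquad(z\in\Delta).$$
   Context: A mapping $f$ is log-harmonic in $\Delta$ if there is an analytic $w$ in $\Delta$ with $|w(z)|<1$ such that $\overline{f_{\bar z}}/\overline{f}=w\,f_z/f$. For $0\le\alpha<1$, $\mathcal{S}^*_{LH}(\alpha)$ is the set of log-harmonic mappings $f(z)=z|z|^{2\beta}h(z)\overline{g(z)}$ with $h(0)=g(0)=1$ satisfying $\mathrm{Re}\left\{\frac{zf_z-\bar z f_{\bar z}}{f}\right\}>\alpha$ for all $z\in\Delta$. *)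

theory Defs
  imports "HOL-Analysis.Analysis"
begin

definition wirt_z :: "(complex \<Rightarrow> complex) \<Rightarrow> complex \<Rightarrow> complex" where
  "wirt_z f z = (frechet_derivative f (at z) 1 - \<i> * frechet_derivative f (at z) \<i>) / 2"

definition wirt_zbar :: "(complex \<Rightarrow> complex) \<Rightarrow> complex \<Rightarrow> complex" where
  "wirt_zbar f z = (frechet_derivative f (at z) 1 + \<i> * frechet_derivative f (at z) \<i>) / 2"

definition log_harmonic_on :: "complex set \<Rightarrow> (complex \<Rightarrow> complex) \<Rightarrow> bool" where
  "log_harmonic_on S f \<longleftrightarrow>
     (\<forall>z\<in>S. f z \<noteq> 0 \<longrightarrow> f differentiable (at z)) \<and>
     (\<exists>w. w analytic_on S \<and> (\<forall>z\<in>S. norm (w z) < 1) \<and>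
          (\<forall>z\<in>S. f z \<noteq> 0 \<longrightarrow>
              cnj (wirt_zbar f z) / cnj (f z) = w z * wirt_z f z / f z))"

text \<open>The map z |z|^(2 beta) h(z) conj(g(z)); the power is 0 at z = 0 (so f 0 = 0).\<close>
definition lh_map :: "complex \<Rightarrow> (complex \<Rightarrow> complex) \<Rightarrow> (complex \<Rightarrow> complex) \<Rightarrow> complex \<Rightarrow> complex" where
  "lh_map \<beta> h g z = z * (complex_of_real (norm z)) powr (2 * \<beta>) * h z * cnj (g z)"

definition starlike_LH :: "real \<Rightarrow> (complex \<Rightarrow> complex) \<Rightarrow> bool" where
  "starlike_LH \<alpha> f \<longleftrightarrow>
     log_harmonic_on (ball 0 1) f \<and>
     (\<exists>\<beta> h g. h analytic_on ball 0 1 \<and> g analytic_on ball 0 1 \<and> h 0 = 1 \<and> g 0 = 1 \<and>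
              f = lh_map \<beta> h g) \<and>
     (\<forall>z\<in>ball 0 1. f z \<noteq> 0 \<longrightarrow>
         Re ((z * wirt_z f z - cnj z * wirt_zbar f z) / f z) > \<alpha>)"

end

theory Submission
  imports Defs "HOL-Complex_Analysis.Complex_Analysis"
begin


lemma powr_eq_E:
  fixes w :: complex assumes "w \<noteq> 0"
  shows "complex_of_real (norm w) powr (2*\<beta>) = exp (\<beta> * Ln (w * cnj w))"
proof -
  have n: "norm w > 0" using assms by simp
  have "w * cnj w = complex_of_real ((norm w)^2)" using complex_norm_square[of w] by simp
  moreover have "Ln (complex_of_real ((norm w)^2)) = of_real (ln ((norm w)^2))"
    by (rule Ln_of_real) (simp add: assms)
  ultimately have "Ln (w * cnj w) = of_real (ln ((norm w)^2))" by simp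
  also have "\<dots> = 2 * of_real (ln (norm w))" using n by (simp add: ln_realpow)
  finally show ?thesis using n by (simp add: powr_def Ln_of_real mult_ac)
qed

lemma E_deriv:
  fixes z :: complex assumes "z \<noteq> 0"
  shows "((\<lambda>w. exp (\<beta> * Ln (w * cnj w))) has_derivative
          (\<lambda>v. exp (\<beta> * Ln (z * cnj z)) * \<beta> * (v / z + cnj v / cnj z))) (at z)"
proof -
  have s: "((\<lambda>w. w * cnj w) has_derivative (\<lambda>v. z * cnj v + v * cnj z)) (at z)"
    by (rule has_derivative_mult[OF has_derivative_ident has_derivative_cnj[OF has_derivative_ident]])
  have pos: "z * cnj z = complex_of_real ((norm z)^2)" using complex_norm_square[of z] by simp
  have nr: "z * cnj z \<notin> \<real>\<^sub>\<le>\<^sub>0" using assms unfolding pos nonpos_Reals_def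
    by (auto simp del: of_real_power simp add: of_real_eq_iff)
  have F: "((\<lambda>u. exp (\<beta> * Ln u)) has_field_derivative exp (\<beta> * Ln (z * cnj z)) * (\<beta> * inverse (z * cnj z))) (at (z * cnj z))"
    by (rule derivative_eq_intros has_field_derivative_Ln[OF nr] | simp)+
  have "((\<lambda>w. exp (\<beta> * Ln (w * cnj w))) has_derivative (\<lambda>v. exp (\<beta> * Ln (z * cnj z)) * (\<beta> * inverse (z * cnj z)) * (z * cnj v + v * cnj z))) (at z)"
    using has_derivative_compose[OF s F[unfolded has_field_derivative_def]] by (simp add: mult_ac)
  then show ?thesis
    by (rule has_derivative_eq_rhs) (auto simp: fun_eq_iff field_simps assms)
qed

lemma lh_deriv:
  fixes z :: complex
  assumes z: "z \<noteq> 0" and hd: "(h has_field_derivative h') (at z)"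
    and gd: "(g has_field_derivative g') (at z)"
  shows "(lh_map \<beta> h g has_derivative (\<lambda>v.
     exp (\<beta> * Ln (z * cnj z)) * cnj (g z) * (h z * (1+\<beta>) + z*h') * v +
     exp (\<beta> * Ln (z * cnj z)) * h z * (z*\<beta>*cnj (g z)/cnj z + z*cnj g') * cnj v)) (at z)"
proof -
  let ?E = "\<lambda>w. exp (\<beta> * Ln (w * cnj w))"
  have h1: "(h has_derivative (\<lambda>v. h' * v)) (at z)" using hd by (simp add: has_field_derivative_def)
  have g1: "(g has_derivative (\<lambda>v. g' * v)) (at z)" using gd by (simp add: has_field_derivative_def)
  have D: "((\<lambda>w. w * ?E w * h w * cnj (g w)) has_derivative
     (\<lambda>v. (z * ?E z * h z) * cnj (g' * v) + ((z * ?E z) * (h' * v) + (z * (?E z * \<beta> * (v / z + cnj v / cnj z)) + v * ?E z) * h z) * cnj (g z))) (at z)"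
    by (rule has_derivative_mult has_derivative_ident E_deriv[OF z] h1 has_derivative_cnj g1)+
  have D2: "(lh_map \<beta> h g has_derivative
     (\<lambda>v. (z * ?E z * h z) * cnj (g' * v) + ((z * ?E z) * (h' * v) + (z * (?E z * \<beta> * (v / z + cnj v / cnj z)) + v * ?E z) * h z) * cnj (g z))) (at z)"
  proof (rule has_derivative_transform_within_open[OF D, of "-{0}"])
    fix w :: complex assume "w \<in> -{0}"
    then show "w * ?E w * h w * cnj (g w) = lh_map \<beta> h g w"
      by (simp add: lh_map_def powr_eq_E)
  qed (use z in auto)
  show ?thesis
    by (rule has_derivative_eq_rhs[OF D2]) (auto simp: fun_eq_iff field_simps z)
qed

lemma wirt_from_deriv:
  assumes "(f has_derivative (\<lambda>v. a * v + b * cnj v)) (at z)"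
  shows "wirt_z f z = a" "wirt_zbar f z = b"
proof -
  have e: "frechet_derivative f (at z) = (\<lambda>v. a * v + b * cnj v)"
    using frechet_derivative_at[OF assms] by simp
  show "wirt_z f z = a" unfolding wirt_z_def e by (simp add: field_simps)
  show "wirt_zbar f z = b" unfolding wirt_zbar_def e by (simp add: field_simps)
qed

lemma lh_expr:
  fixes z :: complex
  assumes z: "z \<noteq> 0" and hd: "(h has_field_derivative h') (at z)"
    and gd: "(g has_field_derivative g') (at z)" and hz: "h z \<noteq> 0" and gz: "g z \<noteq> 0"
  shows "(z * wirt_z (lh_map \<beta> h g) z - cnj z * wirt_zbar (lh_map \<beta> h g) z) / lh_map \<beta> h g z
     = 1 + z * h' / h z - cnj (z * g' / g z)"
proof -
  note W = wirt_from_deriv[OF lh_deriv[OF z hd gd, of \<beta>]]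
  have f: "lh_map \<beta> h g z = z * exp (\<beta> * Ln (z * cnj z)) * h z * cnj (g z)"
    by (simp add: lh_map_def powr_eq_E z)
  have c: "cnj z \<noteq> 0" "cnj (g z) \<noteq> 0" using z gz by auto
  show ?thesis unfolding W f using z hz gz c
    by (simp add: field_simps exp_not_eq_zero)
qed



lemma final_alg:
  fixes g s R :: real
  assumes "1/2 \<le> g" "g < 1" and H: "(1-g)^2 + s^2 + 2*(1-g)*R \<le> 0"
  shows "R * g / (g^2 + s^2) \<le> -(1-g)/(2*g)"
proof -
  have g0: "g > 0" using assms by simp
  have p: "g^2 + s^2 > 0" using g0 by (simp add: add_pos_nonneg)
  have "g^2 * ((1-g)^2 + s^2 + 2*(1-g)*R) \<le> 0"
    using H by (simp add: mult_nonneg_nonpos)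
  moreover have "s^2 * (1 - 2*g) \<le> 0" using assms by (simp add: mult_nonneg_nonpos)
  ultimately have "(1-g) * (2*g^2*R + (1-g)*(g^2+s^2)) \<le> 0"
    by (simp add: algebra_simps power2_eq_square) 
  then have "2*g^2*R + (1-g)*(g^2+s^2) \<le> 0"
    using assms by (simp add: mult_le_0_iff)
  then show ?thesis using g0 p by (simp add: field_simps power2_eq_square)
qed

lemma norm_lt_lemma:
  fixes x :: complex and \<gamma> :: real
  assumes "Re x > \<gamma>" "\<gamma> < 1"
  shows "norm (x - 1) < norm (x + of_real (1 - 2*\<gamma>))"
proof -
  have "(norm (x - 1))^2 < (norm (x + of_real (1 - 2*\<gamma>)))^2"
  proof -
    have "(Re x - 1)^2 < (Re x + (1 - 2*\<gamma>))^2"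
    proof -
      have "(Re x + (1 - 2*\<gamma>))^2 - (Re x - 1)^2 = (2*Re x - 2*\<gamma>) * (2 - 2*\<gamma>)"
        by (simp add: power2_eq_square algebra_simps)
      also have "\<dots> > 0" using assms by simp
      finally show ?thesis by simp
    qed
    then show ?thesis by (simp add: cmod_power2)
  qed
  then show ?thesis by (simp add: power2_less_imp_less)
qed

lemma partB:
  fixes q :: "complex \<Rightarrow> complex" and \<gamma> :: real
  assumes hol: "q holomorphic_on ball 0 1" and q0: "q 0 = 1"
    and nz: "\<forall>z\<in>ball 0 1. q z \<noteq> 0"
    and \<gamma>1: "1/2 \<le> \<gamma>" and \<gamma>2: "\<gamma> < 1"
    and cond: "\<forall>z\<in>ball 0 1. Re (z * deriv q z / q z) > -(1-\<gamma>)/(2*\<gamma>)"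
  shows "\<forall>z\<in>ball 0 1. Re (q z) > \<gamma>"
proof (rule ccontr)
  assume "\<not> ?thesis"
  then obtain z1 where z1: "z1 \<in> ball 0 1" "Re (q z1) \<le> \<gamma>" by auto
  define K where "K = {z \<in> cball 0 (norm z1). Re (q z) \<le> \<gamma>}"
  have sub: "cball 0 (norm z1) \<subseteq> ball 0 1" using z1 by auto
  have contq: "continuous_on (ball 0 1) q" using hol holomorphic_on_imp_continuous_on by blast
  have contR: "continuous_on S (\<lambda>z. Re (q z))" if "S \<subseteq> ball 0 1" for S
    using continuous_on_Re[OF continuous_on_subset[OF contq that]] .
  have "closed K" unfolding K_def
    by (rule continuous_on_closed_Collect_le[OF contR[OF sub] continuous_on_const closed_cball])
  moreover have "K = cball 0 (norm z1) \<inter> K" unfolding K_def by auto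
  ultimately have "compact K" using compact_Int_closed[OF compact_cball] by metis
  moreover have "K \<noteq> {}" using z1 unfolding K_def by auto
  ultimately obtain z0 where z0K: "z0 \<in> K" and z0min: "\<forall>z\<in>K. norm z0 \<le> norm z"
    using continuous_attains_inf[of K norm] continuous_on_norm_id by blast
  define r where "r = norm z0"
  have z0b: "z0 \<in> ball 0 1" "Re (q z0) \<le> \<gamma>" "r \<le> norm z1"
    using z0K z1(1) unfolding K_def r_def by auto
  have "z0 \<noteq> 0" using z0b q0 \<gamma>2 by auto
  then have r0: "r > 0" "r < 1" using z0b unfolding r_def by auto
  have inside: "Re (q z) > \<gamma>" if "norm z < r" for z
  proof (rule ccontr)
    assume "\<not> ?thesis"
    then have "z \<in> K" using that z0b unfolding K_def by auto
    then have "norm z0 \<le> norm z" using z0min by blast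
    then show False using that unfolding r_def by simp
  qed
  have closedin: "Re (q z) \<ge> \<gamma>" if "norm z \<le> r" for z
  proof -
    have sr: "cball 0 r \<subseteq> ball 0 1" using r0 by auto
    have "closed {z \<in> cball 0 r. \<gamma> \<le> Re (q z)}"
      by (rule continuous_on_closed_Collect_le[OF continuous_on_const contR[OF sr] closed_cball])
    moreover have "ball 0 r \<subseteq> {z \<in> cball 0 r. \<gamma> \<le> Re (q z)}"
      using inside by (auto intro: less_imp_le)
    ultimately have "closure (ball 0 r) \<subseteq> {z \<in> cball 0 r. \<gamma> \<le> Re (q z)}"
      by (rule closure_minimal[rotated])
    then show ?thesis using that r0 by auto
  qed
  have Req0: "Re (q z0) = \<gamma>" using closedin[of z0] z0b unfolding r_def by simp
  define D where "D = z0 * deriv q z0"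
  have qd: "(q has_field_derivative deriv q z0) (at z0)"
    using holomorphic_derivI[OF hol open_ball z0b(1)] .
  have ImD: "Im D = 0"
  proof -
    have e: "((\<lambda>w. z0 * exp (\<i> * w)) has_field_derivative z0 * \<i>) (at (of_real 0))"
      by (rule derivative_eq_intros | simp)+
    have "((\<lambda>w. q (z0 * exp (\<i> * w))) has_field_derivative deriv q z0 * (z0 * \<i>)) (at (of_real 0))"
      using DERIV_chain2[of q "deriv q z0" "\<lambda>w. z0 * exp (\<i> * w)", OF _ e] qd by simp
    then have "((\<lambda>x. q (z0 * exp (\<i> * of_real x))) has_vector_derivative deriv q z0 * (z0 * \<i>)) (at 0)"
      by (rule has_vector_derivative_real_field)
    then have T: "((\<lambda>x. Re (q (z0 * exp (\<i> * of_real x)))) has_real_derivative Re (deriv q z0 * (z0 * \<i>))) (at 0)"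
      by (rule has_field_derivative_Re)
    have "Re (deriv q z0 * (z0 * \<i>)) = 0"
    proof (rule DERIV_local_min[OF T zero_less_one], intro allI impI)
      fix y :: real
      have "norm (z0 * exp (\<i> * of_real y)) = r" unfolding r_def by (simp add: norm_mult)
      then have "Re (q (z0 * exp (\<i> * of_real y))) \<ge> \<gamma>" using closedin by simp
      then show "Re (q (z0 * exp (\<i> * of_real 0))) \<le> Re (q (z0 * exp (\<i> * of_real y)))"
        using Req0 by simp
    qed
    then show ?thesis unfolding D_def by (simp add: mult_ac)
  qed
  define a where "a = complex_of_real (1 - 2*\<gamma>)"
  have schw: "norm (q (of_real t * z0) - 1) \<le> t * norm (q (of_real t * z0) + a)" if t: "0 \<le> t" "t < 1" for t
  proof -
    define \<psi> where "\<psi> = (\<lambda>w. (q (z0 * w) - 1) / (q (z0 * w) + a))"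
    have nzw: "norm (z0 * w) < r" if "norm w < 1" for w
    proof -
      have "norm (z0 * w) = r * norm w" by (simp add: norm_mult r_def)
      also have "\<dots> < r * 1" using that r0(1) by (rule mult_strict_left_mono[OF _])
      finally show ?thesis by simp
    qed
    have inb: "Re (q (z0 * w)) > \<gamma>" if "norm w < 1" for w
      using inside[OF nzw[OF that]] .
    have den: "q (z0 * w) + a \<noteq> 0" if "norm w < 1" for w
      using norm_lt_lemma[OF inb[OF that] \<gamma>2] unfolding a_def by auto
    have hc: "(\<lambda>w. q (z0 * w)) holomorphic_on ball 0 1"
    proof -
      have "(q \<circ> (\<lambda>w. z0 * w)) holomorphic_on ball 0 1"
      proof (rule holomorphic_on_compose)
        show "(\<lambda>w. z0 * w) holomorphic_on ball 0 1" by (intro holomorphic_intros)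
        have "(\<lambda>w. z0 * w) ` ball 0 1 \<subseteq> ball 0 1"
        proof
          fix x assume "x \<in> (\<lambda>w. z0 * w) ` ball 0 1"
          then obtain w where "norm w < 1" "x = z0 * w" by auto
          then show "x \<in> ball 0 1" using nzw[of w] r0(2) by simp
        qed
        then show "q holomorphic_on (\<lambda>w. z0 * w) ` ball 0 1" using hol holomorphic_on_subset by blast
      qed
      then show ?thesis by (simp add: o_def)
    qed
    have hp: "\<psi> holomorphic_on ball 0 1" unfolding \<psi>_def
      using den by (intro holomorphic_intros hc) auto
    have p0: "\<psi> 0 = 0" unfolding \<psi>_def using q0 by simp
    have pl: "norm (\<psi> w) < 1" if "norm w < 1" for w
      unfolding \<psi>_def using norm_lt_lemma[OF inb[OF that] \<gamma>2] den[OF that]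
      by (simp add: norm_divide a_def divide_less_eq)
    have tl: "norm (complex_of_real t) < 1" using t by simp
    have "norm (\<psi> (of_real t)) \<le> norm (complex_of_real t)"
      by (rule Schwarz_Lemma(1)[OF hp p0 pl tl])
    then have "norm (q (z0 * of_real t) - 1) / norm (q (z0 * of_real t) + a) \<le> t"
      unfolding \<psi>_def using t by (simp add: norm_divide)
    moreover have "norm (q (z0 * of_real t) + a) > 0" using den[of "of_real t"] t by simp
    ultimately show ?thesis by (simp add: divide_le_eq mult_ac)
  qed
  define Q where "Q = (\<lambda>t::real. q (of_real t * z0))"
  define GG where "GG = (\<lambda>t::real. t^2 * ((Re (Q t) + (1 - 2*\<gamma>))^2 + (Im (Q t))^2)
                                   - ((Re (Q t) - 1)^2 + (Im (Q t))^2))"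
  have Gnn: "GG t \<ge> 0" if "0 \<le> t" "t < 1" for t
  proof -
    have "(norm (Q t - 1))^2 \<le> (t * norm (Q t + a))^2"
      using schw[OF that] unfolding Q_def by (intro power_mono) auto
    then show ?thesis unfolding GG_def a_def by (simp add: cmod_power2 power_mult_distrib)
  qed
  have G1: "GG 1 = 0" unfolding GG_def Q_def using Req0 by (simp add: power2_eq_square algebra_simps)
  have e2: "((\<lambda>w. q (w * z0)) has_field_derivative deriv q z0 * z0) (at (of_real 1))"
  proof -
    have e0: "((\<lambda>w. w * z0) has_field_derivative z0) (at (of_real 1))"
      by (rule derivative_eq_intros | simp)+
    show ?thesis using DERIV_chain2[of q "deriv q z0" "\<lambda>w. w * z0", OF _ e0] qd by simp
  qed
  then have "((\<lambda>x. q (of_real x * z0)) has_vector_derivative deriv q z0 * z0) (at 1)"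
    by (rule has_vector_derivative_real_field)
  then have QD: "(Q has_vector_derivative D) (at 1)" unfolding Q_def D_def by (simp add: mult_ac)
  have X: "((\<lambda>t. Re (Q t)) has_real_derivative Re D) (at 1)" using has_field_derivative_Re[OF QD] .
  have Y: "((\<lambda>t. Im (Q t)) has_real_derivative Im D) (at 1)" using has_field_derivative_Im[OF QD] .
  have GD: "(GG has_real_derivative
      (2 * 1 * ((Re (Q 1) + (1 - 2*\<gamma>))^2 + (Im (Q 1))^2)
       + 1^2 * (2 * (Re (Q 1) + (1 - 2*\<gamma>)) * Re D + 2 * Im (Q 1) * Im D))
      - (2 * (Re (Q 1) - 1) * Re D + 2 * Im (Q 1) * Im D)) (at 1)"
    unfolding GG_def
    by (rule derivative_eq_intros QD refl | simp add: algebra_simps)+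
  have "2 * 1 * ((Re (Q 1) + (1 - 2*\<gamma>))^2 + (Im (Q 1))^2)
       + 1^2 * (2 * (Re (Q 1) + (1 - 2*\<gamma>)) * Re D + 2 * Im (Q 1) * Im D)
      - (2 * (Re (Q 1) - 1) * Re D + 2 * Im (Q 1) * Im D) \<le> 0"
  proof (rule ccontr)
    assume "\<not> ?thesis"
    then obtain d where d: "d > 0" "\<forall>h>0. h < d \<longrightarrow> GG (1 - h) < GG 1"
      using DERIV_pos_inc_left[OF GD] by force
    define h where "h = min (d/2) (1/2)"
    have "GG (1 - h) < 0" using d G1 unfolding h_def by auto
    moreover have "GG (1 - h) \<ge> 0" using d by (intro Gnn) (auto simp: h_def)
    ultimately show False by simp
  qed
  then have G: "(1-\<gamma>)^2 + (Im (q z0))^2 + 2*(1-\<gamma>)*Re D \<le> 0"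
    unfolding Q_def using Req0 by (simp add: power2_eq_square algebra_simps)
  have c: "Re (D / q z0) > -(1-\<gamma>)/(2*\<gamma>)" using cond z0b unfolding D_def by auto
  have "Re (D / q z0) = Re D * \<gamma> / (\<gamma>^2 + (Im (q z0))^2)"
    using ImD Req0 by (simp add: Re_divide)
  with c final_alg[OF \<gamma>1 \<gamma>2 G] show False by simp
qed


theorem mainTheorem4:
  fixes \<alpha> :: real and \<beta> :: complex and h g :: "complex \<Rightarrow> complex"
  assumes "1/2 < \<alpha>" and "\<alpha> < 1"
    and "Re \<beta> > -1/2"
    and "h analytic_on ball 0 1" and "g analytic_on ball 0 1"
    and "\<forall>z\<in>ball 0 1. h z \<noteq> 0" and "\<forall>z\<in>ball 0 1. g z \<noteq> 0"
    and "h 0 = 1" and "g 0 = 1"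
    and "starlike_LH \<alpha> (lh_map \<beta> h g)"
  shows "\<forall>z\<in>ball 0 1. Re (h z / g z) > 1 / (3 - 2 * \<alpha>)"
proof -
  note a = assms
  have hh: "h holomorphic_on ball 0 1" using a(4) by (rule analytic_imp_holomorphic)
  have gh: "g holomorphic_on ball 0 1" using a(5) by (rule analytic_imp_holomorphic)
  have hd: "(h has_field_derivative deriv h z) (at z)" if "z \<in> ball 0 1" for z
    using holomorphic_derivI[OF hh open_ball that] .
  have gd: "(g has_field_derivative deriv g z) (at z)" if "z \<in> ball 0 1" for z
    using holomorphic_derivI[OF gh open_ball that] .
  define q where "q = (\<lambda>z. h z / g z)"
  have qh: "q holomorphic_on ball 0 1" unfolding q_def using a(7) by (intro holomorphic_intros hh gh) auto
  have dq: "deriv q z = (deriv h z * g z - h z * deriv g z) / (g z * g z)" if "z \<in> ball 0 1" for z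
  proof -
    have "(q has_field_derivative (deriv h z * g z - h z * deriv g z) / (g z * g z)) (at z)"
      unfolding q_def using DERIV_divide[OF hd[OF that] gd[OF that]] a(7) that by auto
    then show ?thesis by (rule DERIV_imp_deriv)
  qed
  define \<gamma> where "\<gamma> = 1 / (3 - 2*\<alpha>)"
  have g1: "1/2 \<le> \<gamma>" unfolding \<gamma>_def using a(1,2) by (simp add: field_simps)
  have g2: "\<gamma> < 1" unfolding \<gamma>_def using a(1,2) by (simp add: field_simps)
  have geq: "-(1-\<gamma>)/(2*\<gamma>) = \<alpha> - 1" unfolding \<gamma>_def using a(1,2) by (simp add: field_simps)
  have SL: "\<forall>z\<in>ball 0 1. lh_map \<beta> h g z \<noteq> 0 \<longrightarrow>
         Re ((z * wirt_z (lh_map \<beta> h g) z - cnj z * wirt_zbar (lh_map \<beta> h g) z) / lh_map \<beta> h g z) > \<alpha>"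
    using a(10) unfolding starlike_LH_def by blast
  have cond: "\<forall>z\<in>ball 0 1. Re (z * deriv q z / q z) > -(1-\<gamma>)/(2*\<gamma>)"
  proof
    fix z :: complex assume z: "z \<in> ball 0 1"
    have hz: "h z \<noteq> 0" and gz: "g z \<noteq> 0" using a(6,7) z by auto
    show "Re (z * deriv q z / q z) > -(1-\<gamma>)/(2*\<gamma>)"
    proof (cases "z = 0")
      case True then show ?thesis unfolding geq using a(2) by simp
    next
      case False
      have fnz: "lh_map \<beta> h g z \<noteq> 0"
        using False hz gz by (simp add: lh_map_def powr_def)
      have "Re (1 + z * deriv h z / h z - cnj (z * deriv g z / g z)) > \<alpha>"
        using SL z fnz lh_expr[OF False hd[OF z] gd[OF z] hz gz, of \<beta>] by auto
      moreover have e: "\<And>u w. Re (1 + u - cnj w) = 1 + Re u - Re (w::complex)" by simp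
      ultimately have "1 + Re (z * deriv h z / h z) - Re (z * deriv g z / g z) > \<alpha>"
        by (simp only: e)
      moreover have "z * deriv q z / q z = z * deriv h z / h z - z * deriv g z / g z"
        using hz gz by (subst dq[OF z]) (simp add: q_def field_simps)
      ultimately show ?thesis unfolding geq by simp
    qed
  qed
  have "\<forall>z\<in>ball 0 1. Re (q z) > \<gamma>"
    by (rule partB[OF qh _ _ g1 g2 cond]) (use a(6,7,8,9) in \<open>auto simp: q_def\<close>)
  then show ?thesis unfolding q_def \<gamma>_def by simp
qed

end
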